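(* Let $\mathbb{K}$ be a Cantor complete ordered field. Then for every valuation $v$ on $\mathbb{K}$, the metric space $(\mathbb{K},d)$, where $d(a,b)=e^{-v(a-b)}$ is the valuation metric, is spherically complete.
   Context: An ordered field is Cantor complete if every nested (decreasing) sequence of closed intervals $[a_n,b_n]$ has nonempty intersection. A metric space is spherically complete if every nested (decreasing) sequence of closed balls has nonempty intersection. A valuation on an ordered field $\mathbb{K}$ is a map $v:\mathbb{K}\to\mathbb{R}\cup\{\infty\}$ such that for all $x,y$: $v(x)=\infty$ iff $x=0$; $v(xy)=v(x)+v(y)$; $v(x+y)\ge\min\{v(x),v(y)\}$; and $|x|<|y|$ implies $v(x)\ge v(y)$ (with $r\le\infty$, $r+\infty=\infty$). The valuation metric is $d(a,b)=e^{-v(a-b)}$, with $e^{-\infty}=0$. *)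

theory Defs
  imports "HOL-Library.Extended_Real"
begin

definition cantor_complete :: "'a::linordered_field itself \<Rightarrow> bool" where
  "cantor_complete TYPE('a) \<longleftrightarrow>
     (\<forall>(a::nat \<Rightarrow> 'a) b.
        (\<forall>n. a n \<le> b n) \<and> (\<forall>n. {a (Suc n)..b (Suc n)} \<subseteq> {a n..b n})
        \<longrightarrow> (\<Inter>n. {a n..b n}) \<noteq> {})"

text \<open>A valuation with values in \<open>\<real> \<union> {\<infinity>}\<close>, modelled as extended reals
never taking the value \<open>-\<infinity>\<close>.\<close>
definition is_valuation :: "('a::linordered_field \<Rightarrow> ereal) \<Rightarrow> bool" where
  "is_valuation v \<longleftrightarrow>
     (\<forall>x. v x \<noteq> -\<infinity>) \<and>
     (\<forall>x. v x = \<infinity> \<longleftrightarrow> x = 0) \<and>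
     (\<forall>x y. v (x * y) = v x + v y) \<and>
     (\<forall>x y. v (x + y) \<ge> min (v x) (v y)) \<and>
     (\<forall>x y. \<bar>x\<bar> < \<bar>y\<bar> \<longrightarrow> v x \<ge> v y)"

definition val_dist :: "('a::linordered_field \<Rightarrow> ereal) \<Rightarrow> 'a \<Rightarrow> 'a \<Rightarrow> real" where
  "val_dist v a b = (if v (a - b) = \<infinity> then 0 else exp (- real_of_ereal (v (a - b))))"

definition dcball :: "('a \<Rightarrow> 'a \<Rightarrow> real) \<Rightarrow> 'a \<Rightarrow> real \<Rightarrow> 'a set" where
  "dcball d c r = {x. d c x \<le> r}"

definition spherically_complete :: "('a \<Rightarrow> 'a \<Rightarrow> real) \<Rightarrow> bool" where
  "spherically_complete d \<longleftrightarrow>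
     (\<forall>(c::nat \<Rightarrow> 'a) (r::nat \<Rightarrow> real).
        (\<forall>n. 0 \<le> r n) \<and> (\<forall>n. dcball d (c (Suc n)) (r (Suc n)) \<subseteq> dcball d (c n) (r n))
        \<longrightarrow> (\<Inter>n. dcball d (c n) (r n)) \<noteq> {})"

end

theory Submission
  imports Defs
begin

lemma val_basic:
  fixes v :: "'a::linordered_field \<Rightarrow> ereal"
  assumes "is_valuation v"
  shows "v 1 = 0" "v (-1) = 0" "\<And>z. v (-z) = v z"
proof -
  have ninf: "\<And>x. v x \<noteq> -\<infinity>" and inf: "\<And>x. v x = \<infinity> \<longleftrightarrow> x = 0"
    and mul: "\<And>x y. v (x * y) = v x + v y" using assms unfolding is_valuation_def by auto
  have "v 1 = v 1 + v 1" using mul[of 1 1] by simp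
  moreover have "v 1 \<noteq> \<infinity>" "v 1 \<noteq> -\<infinity>" using ninf inf by auto
  ultimately show v1: "v 1 = 0" by (cases "v 1") auto
  have "v 1 = v (-1) + v (-1)" using mul[of "-1" "-1"] by simp
  moreover have "v (-1) \<noteq> \<infinity>" "v (-1) \<noteq> -\<infinity>" using ninf inf by auto
  ultimately show vm1: "v (-1) = 0" using v1 by (cases "v (-1)") auto
  fix z
  show "v (-z) = v z" using mul[of "-1" z] vm1 by simp
qed

lemma val_mono:
  fixes v :: "'a::linordered_field \<Rightarrow> ereal"
  assumes "is_valuation v" "\<bar>x\<bar> \<le> \<bar>y\<bar>"
  shows "v y \<le> v x"
proof (cases "\<bar>x\<bar> < \<bar>y\<bar>")
  case True then show ?thesis using assms(1) unfolding is_valuation_def by auto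
next
  case False
  then have "\<bar>x\<bar> = \<bar>y\<bar>" using assms(2) by auto
  then have "x = y \<or> x = - y" by (auto simp: abs_if split: if_splits)
  then show ?thesis using val_basic(3)[OF assms(1)] by auto
qed

definition gfun :: "ereal \<Rightarrow> real" where
  "gfun e = (if e = \<infinity> then 0 else exp (- real_of_ereal e))"

lemma gfun_anti:
  assumes "e2 \<le> e1" "e2 \<noteq> -\<infinity>"
  shows "gfun e1 \<le> gfun e2"
  using assms unfolding gfun_def
  by (cases e1; cases e2) auto

lemma gfun_nonneg: "0 \<le> gfun e"
  unfolding gfun_def by auto

lemma vd_g: "val_dist v a b = gfun (v (a - b))"
  unfolding val_dist_def gfun_def by simp

lemma vd_sym:
  assumes "is_valuation v"
  shows "val_dist v a b = val_dist v b a"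
  using val_basic(3)[OF assms, of "a - b"] unfolding vd_g by simp

lemma vd_mono:
  assumes "is_valuation v" "\<bar>c - x\<bar> \<le> \<bar>c - y\<bar>"
  shows "val_dist v c x \<le> val_dist v c y"
  unfolding vd_g
  apply (rule gfun_anti)
  using val_mono[OF assms] assms(1) unfolding is_valuation_def by auto

lemma vd_ultra:
  assumes "is_valuation v"
  shows "val_dist v a c \<le> max (val_dist v a b) (val_dist v b c)"
proof -
  have le: "min (v (a - b)) (v (b - c)) \<le> v (a - c)"
    using assms unfolding is_valuation_def
    by (metis diff_add_cancel add_diff_eq)
  have ni: "min (v (a - b)) (v (b - c)) \<noteq> -\<infinity>"
    using assms unfolding is_valuation_def by (simp add: min_def)
  have "gfun (v (a - c)) \<le> gfun (min (v (a - b)) (v (b - c)))"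
    by (rule gfun_anti[OF le ni])
  also have "\<dots> \<le> max (gfun (v (a - b))) (gfun (v (b - c)))"
    by (simp add: min_def)
  finally show ?thesis unfolding vd_g .
qed

lemma recenter:
  assumes "is_valuation v" "x \<in> dcball (val_dist v) c r"
  shows "dcball (val_dist v) x r = dcball (val_dist v) c r"
proof -
  have xc: "val_dist v c x \<le> r" "val_dist v x c \<le> r"
    using assms(2) vd_sym[OF assms(1)] unfolding dcball_def by auto
  show ?thesis
    unfolding dcball_def
  proof (intro set_eqI iffI; simp)
    fix z assume "val_dist v x z \<le> r"
    then show "val_dist v c z \<le> r"
      using vd_ultra[OF assms(1), where a=c and b=x and c=z] xc by linarith
  next
    fix z assume "val_dist v c z \<le> r"
    then show "val_dist v x z \<le> r"
      using vd_ultra[OF assms(1), where a=x and b=c and c=z] xc by linarith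
  qed
qed

lemma center_in: "is_valuation v \<Longrightarrow> 0 \<le> r \<Longrightarrow> c \<in> dcball (val_dist v) c r"
  unfolding dcball_def val_dist_def is_valuation_def by simp

theorem theorem2p6:
  fixes v :: "'a::linordered_field \<Rightarrow> ereal"
  assumes "cantor_complete TYPE('a)"
    and "is_valuation v"
  shows "spherically_complete (val_dist v)"
  unfolding spherically_complete_def
proof (intro allI impI)
  fix c :: "nat \<Rightarrow> 'a" and r :: "nat \<Rightarrow> real"
  assume H: "(\<forall>n. 0 \<le> r n) \<and> (\<forall>n. dcball (val_dist v) (c (Suc n)) (r (Suc n)) \<subseteq> dcball (val_dist v) (c n) (r n))"
  define B where "B n = dcball (val_dist v) (c n) (r n)" for n
  have Bsuc: "B (Suc n) \<subseteq> B n" for n using H unfolding B_def by auto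
  have Bmono: "n \<le> m \<Longrightarrow> B m \<subseteq> B n" for n m
    using lift_Suc_antimono_le[of B, OF Bsuc] by blast
  have cin: "c n \<in> B n" for n using H center_in[OF assms(2)] unfolding B_def by blast
  show "(\<Inter>n. dcball (val_dist v) (c n) (r n)) \<noteq> {}"
  proof
    assume E: "(\<Inter>n. dcball (val_dist v) (c n) (r n)) = {}"
    have ex: "\<exists>m. n < m \<and> c n \<notin> B m" for n
    proof -
      obtain m where m: "c n \<notin> B m" using E unfolding B_def by blast
      have "\<not> m \<le> n" using Bmono cin m by blast
      then show ?thesis using m by (meson not_le)
    qed
    define g where "g n = (SOME m. n < m \<and> c n \<notin> B m)" for n
    have g: "n < g n" "c n \<notin> B (g n)" for n
      using someI_ex[OF ex[of n]] unfolding g_def by auto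
    define s where "s k = (g ^^ k) 0" for k
    have sSuc: "s (Suc k) = g (s k)" for k unfolding s_def by simp
    have sge: "k \<le> s k" for k
      proof (induction k)
      case (Suc k)
      then show ?case using g(1)[of "s k"] sSuc[of k] by simp
    qed simp
    define a where "a k = c (s (Suc k)) - \<bar>c (s k) - c (s (Suc k))\<bar>" for k
    define b where "b k = c (s (Suc k)) + \<bar>c (s k) - c (s (Suc k))\<bar>" for k
    have int1: "{a k..b k} \<subseteq> B (s k)" for k
    proof
      fix x assume x: "x \<in> {a k..b k}"
      let ?c' = "c (s (Suc k))" and ?y = "c (s k)"
      have c'in: "?c' \<in> B (s k)" using Bmono[of "s k" "s (Suc k)"] cin sSuc g(1)
        by (metis less_imp_le subsetD)
      have eq: "B (s k) = dcball (val_dist v) ?c' (r (s k))"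
        using recenter[OF assms(2), of ?c' "c (s k)" "r (s k)"] c'in unfolding B_def by simp
      have "\<bar>?c' - x\<bar> \<le> \<bar>?c' - ?y\<bar>" using x unfolding a_def b_def by auto
      then have "val_dist v ?c' x \<le> val_dist v ?c' ?y" by (rule vd_mono[OF assms(2)])
      moreover have "val_dist v ?c' ?y \<le> r (s k)" using cin[of "s k"] eq unfolding dcball_def by auto
      ultimately show "x \<in> B (s k)" using eq unfolding dcball_def by auto
    qed
    have int2: "B (s (Suc k)) \<subseteq> {a k..b k}" for k
    proof
      fix x assume x: "x \<in> B (s (Suc k))"
      let ?c' = "c (s (Suc k))" and ?y = "c (s k)"
      show "x \<in> {a k..b k}"
      proof (rule ccontr)
        assume "x \<notin> {a k..b k}"
        then have "\<bar>?c' - ?y\<bar> \<le> \<bar>?c' - x\<bar>" unfolding a_def b_def by auto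
        then have "val_dist v ?c' ?y \<le> val_dist v ?c' x" by (rule vd_mono[OF assms(2)])
        moreover have "val_dist v ?c' x \<le> r (s (Suc k))" using x unfolding B_def dcball_def by auto
        ultimately have "?y \<in> B (s (Suc k))" unfolding B_def dcball_def by auto
        then show False using g(2)[of "s k"] sSuc by simp
      qed
    qed
    have "(\<forall>n. a n \<le> b n) \<and> (\<forall>n. {a (Suc n)..b (Suc n)} \<subseteq> {a n..b n})"
    proof
      show "\<forall>n. a n \<le> b n" unfolding a_def b_def by auto
      show "\<forall>n. {a (Suc n)..b (Suc n)} \<subseteq> {a n..b n}"
        using int1 int2 by blast
    qed
    then have "(\<Inter>n. {a n..b n}) \<noteq> {}" using assms(1) unfolding cantor_complete_def by blast
    then obtain x where x: "\<And>n. x \<in> {a n..b n}" by blast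
    have "x \<in> B n" for n using x[of n] int1[of n] Bmono[OF sge[of n]] by blast
    then show False using E unfolding B_def by blast
  qed
qed

end
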